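(* Let $\pi\colon(X,T)\to(Y,T)$ be a factor map between topological dynamical systems with $(Y,T)$ minimal, and let $K\ge1$ be an integer. Suppose that for every $y\in Y$ there exists $u\in E(2^X,T)$ such that $\#\,u\circ\pi^{-1}(y)\le K$. Then $\pi$ is almost $k$-to-$1$ for some $k\le K$.
   Context: A topological dynamical system is a pair $(X,T)$ with $X$ a compact metric space and $T$ a homeomorphism. The hyperspace $(2^X,T)$ consists of the nonempty closed subsets of $X$ with the Hausdorff metric and the action $A\mapsto T(A)$. The Ellis semigroup $E(2^X,T)$ is the closure of $\{A\mapsto T^nA: n\in\mathbb{Z}\}$ in $(2^X)^{2^X}$ with the product topology, with composition as operation. For $u\in E(2^X,T)$ and $A\in 2^X$, $u\circ A\in 2^X$ denotes the image of the point $A$ under $u$; equivalently it is the set of $x\in X$ for which there are nets $x_\lambda\in A$ and $m_\lambda\in\mathbb{Z}$ with $T^{m_\lambda}x_\lambda\to x$ and $T^{m_\lambda}\to u$. A factor map $\pi$ is almost $k$-to-$1$ if $\#\pi^{-1}(y)=k$ for all $y$ in a residual subset of $Y$. *)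

theory Defs
  imports "HOL-Analysis.Analysis"
begin

definition int_iter :: "('a \<Rightarrow> 'a) \<Rightarrow> 'a set \<Rightarrow> int \<Rightarrow> 'a \<Rightarrow> 'a" where
  "int_iter T X n = (if 0 \<le> n then T ^^ nat n else (inv_into X T) ^^ nat (- n))"

definition hausdorff_dist :: "'a::metric_space set \<Rightarrow> 'a set \<Rightarrow> real" where
  "hausdorff_dist A B = max (SUP a\<in>A. infdist a B) (SUP b\<in>B. infdist b A)"

definition hyperspace :: "'a::metric_space set \<Rightarrow> 'a set set" where
  "hyperspace X = {A. A \<subseteq> X \<and> closed A \<and> A \<noteq> {}}"

definition hyper_open :: "'a::metric_space set \<Rightarrow> 'a set set \<Rightarrow> bool" where
  "hyper_open X U \<longleftrightarrow> U \<subseteq> hyperspace X \<and>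
     (\<forall>A\<in>U. \<exists>e>0. \<forall>B\<in>hyperspace X. hausdorff_dist A B < e \<longrightarrow> B \<in> U)"

lemma istopology_hyper_open: "istopology (hyper_open X)"
  unfolding istopology_def
proof (intro conjI allI impI)
  fix S T assume S: "hyper_open X S" and T: "hyper_open X T"
  show "hyper_open X (S \<inter> T)"
    unfolding hyper_open_def
  proof (intro conjI ballI)
    show "S \<inter> T \<subseteq> hyperspace X" using S unfolding hyper_open_def by blast
  next
    fix A assume "A \<in> S \<inter> T"
    then obtain e1 e2 where "e1 > 0" "\<forall>B\<in>hyperspace X. hausdorff_dist A B < e1 \<longrightarrow> B \<in> S"
        "e2 > 0" "\<forall>B\<in>hyperspace X. hausdorff_dist A B < e2 \<longrightarrow> B \<in> T"
      using S T unfolding hyper_open_def by blast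
    then show "\<exists>e>0. \<forall>B\<in>hyperspace X. hausdorff_dist A B < e \<longrightarrow> B \<in> S \<inter> T"
      by (intro exI[of _ "min e1 e2"]) auto
  qed
next
  fix K assume "\<forall>S\<in>K. hyper_open X S"
  then have K: "\<And>S. S \<in> K \<Longrightarrow> hyper_open X S" by blast
  show "hyper_open X (\<Union>K)"
    unfolding hyper_open_def
  proof (intro conjI ballI)
    show "\<Union>K \<subseteq> hyperspace X" using K unfolding hyper_open_def by blast
  next
    fix A assume "A \<in> \<Union>K"
    then obtain S where "S \<in> K" "A \<in> S" by blast
    then obtain e where "e > 0" "\<forall>B\<in>hyperspace X. hausdorff_dist A B < e \<longrightarrow> B \<in> S"
      using K unfolding hyper_open_def by blast
    then show "\<exists>e>0. \<forall>B\<in>hyperspace X. hausdorff_dist A B < e \<longrightarrow> B \<in> \<Union>K"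
      using \<open>S \<in> K\<close> by blast
  qed
qed

definition hyper_topology :: "'a::metric_space set \<Rightarrow> 'a set topology" where
  "hyper_topology X = topology (hyper_open X)"

definition hyper_ellis :: "('a::metric_space \<Rightarrow> 'a) \<Rightarrow> 'a set \<Rightarrow> ('a set \<Rightarrow> 'a set) set" where
  "hyper_ellis T X =
     (product_topology (\<lambda>_. hyper_topology X) (hyperspace X)) closure_of
       {restrict (\<lambda>A. int_iter T X n ` A) (hyperspace X) | n. True}"

definition minimal_system :: "'b::metric_space set \<Rightarrow> ('b \<Rightarrow> 'b) \<Rightarrow> bool" where
  "minimal_system Y S \<longleftrightarrow> Y \<noteq> {} \<and>
     (\<forall>Z. Z \<subseteq> Y \<and> closed Z \<and> Z \<noteq> {} \<and> S ` Z \<subseteq> Z \<longrightarrow> Z = Y)"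

definition factor_map ::
  "'a::metric_space set \<Rightarrow> ('a \<Rightarrow> 'a) \<Rightarrow> 'b::metric_space set \<Rightarrow> ('b \<Rightarrow> 'b) \<Rightarrow> ('a \<Rightarrow> 'b) \<Rightarrow> bool" where
  "factor_map X T Y S \<pi> \<longleftrightarrow> continuous_on X \<pi> \<and> \<pi> ` X = Y \<and> (\<forall>x\<in>X. \<pi> (T x) = S (\<pi> x))"

definition residual_in :: "'b::metric_space set \<Rightarrow> 'b set \<Rightarrow> bool" where
  "residual_in Y R \<longleftrightarrow> R \<subseteq> Y \<and> (\<exists>U :: nat \<Rightarrow> 'b set.
     (\<forall>n. openin (top_of_set Y) (U n) \<and> Y \<subseteq> closure (U n)) \<and> (\<Inter>n. U n) \<inter> Y \<subseteq> R)"

definition almost_k_to_1 ::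
  "'a::metric_space set \<Rightarrow> 'b::metric_space set \<Rightarrow> ('a \<Rightarrow> 'b) \<Rightarrow> nat \<Rightarrow> bool" where
  "almost_k_to_1 X Y \<pi> k \<longleftrightarrow> (\<exists>R. residual_in Y R \<and>
     (\<forall>y\<in>R. finite (X \<inter> \<pi> -` {y}) \<and> card (X \<inter> \<pi> -` {y}) = k))"

end

theory Submission
  imports Defs
begin

definition fib :: "'a set \<Rightarrow> ('a \<Rightarrow> 'b) \<Rightarrow> 'b \<Rightarrow> 'a set" where
  "fib X \<pi> y = X \<inter> \<pi> -` {y}"

definition sepin :: "'a::metric_space set \<Rightarrow> nat \<Rightarrow> real \<Rightarrow> bool" where
  "sepin A m c \<longleftrightarrow> (\<exists>p. (\<forall>i<m. p i \<in> A) \<and> (\<forall>i<m. \<forall>j<m. i \<noteq> j \<longrightarrow> c \<le> dist (p i) (p j)))"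

lemma fib_step:
  assumes "f ` X = X" "inj_on g Y" "\<pi> ` X = Y" "\<forall>x\<in>X. \<pi> (f x) = g (\<pi> x)" "z \<in> Y"
  shows "f ` fib X \<pi> z = fib X \<pi> (g z)"
proof
  show "f ` fib X \<pi> z \<subseteq> fib X \<pi> (g z)" using assms by (auto simp: fib_def)
  show "fib X \<pi> (g z) \<subseteq> f ` fib X \<pi> z"
  proof
    fix x' assume "x' \<in> fib X \<pi> (g z)"
    then have x': "x' \<in> X" "\<pi> x' = g z" by (auto simp: fib_def)
    then obtain x where x: "x \<in> X" "x' = f x" using assms(1) by blast
    then have "g (\<pi> x) = g z" using x' assms(4) by auto
    moreover have "\<pi> x \<in> Y" using x assms(3) by blast
    ultimately have "\<pi> x = z" using assms(2,5) by (meson inj_onD)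
    then show "x' \<in> f ` fib X \<pi> z" using x by (auto simp: fib_def)
  qed
qed

lemma fib_iter:
  assumes "f ` X = X" "inj_on g Y" "g ` Y \<subseteq> Y" "\<pi> ` X = Y" "\<forall>x\<in>X. \<pi> (f x) = g (\<pi> x)" "y \<in> Y"
  shows "(f^^k) ` fib X \<pi> y = fib X \<pi> ((g^^k) y) \<and> (g^^k) y \<in> Y"
proof (induction k)
  case 0 then show ?case using assms by simp
next
  case (Suc k)
  have "(f^^Suc k) ` fib X \<pi> y = f ` ((f^^k) ` fib X \<pi> y)" by (simp add: image_comp)
  also have "\<dots> = fib X \<pi> (g ((g^^k) y))" using Suc fib_step[OF assms(1,2,4,5)] by simp
  finally show ?case using Suc assms(3) by auto
qed

lemma homeo_facts:
  assumes "homeomorphism X X T (inv_into X T)"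
  shows "T ` X = X" "inj_on T X" "inv_into X T ` X = X" "inj_on (inv_into X T) X"
    "\<forall>x\<in>X. inv_into X T (T x) = x" "\<forall>x\<in>X. T (inv_into X T x) = x"
  using assms unfolding homeomorphism_def by (auto intro: inj_on_inverseI)

lemma fib_int_iter:
  assumes hT: "homeomorphism X X T (inv_into X T)" and hS: "homeomorphism Y Y S (inv_into Y S)"
    and f: "factor_map X T Y S \<pi>" and y: "y \<in> Y"
  shows "int_iter T X n ` fib X \<pi> y = fib X \<pi> (int_iter S Y n y) \<and> int_iter S Y n y \<in> Y"
proof (cases "0 \<le> n")
  case True
  show ?thesis unfolding int_iter_def using True
    apply simp
    by (intro fib_iter) (use homeo_facts[OF hT] homeo_facts[OF hS] f y in \<open>auto simp: factor_map_def\<close>)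
next
  case False
  have "\<forall>x\<in>X. \<pi> (inv_into X T x) = inv_into Y S (\<pi> x)"
  proof
    fix x assume x: "x \<in> X"
    define x' where "x' = inv_into X T x"
    have x': "x' \<in> X" "T x' = x" using homeo_facts[OF hT] x unfolding x'_def by blast+
    have "\<pi> x = S (\<pi> x')" using f x' unfolding factor_map_def by auto
    moreover have "\<pi> x' \<in> Y" using f x' unfolding factor_map_def by auto
    ultimately show "\<pi> (inv_into X T x) = inv_into Y S (\<pi> x)"
      using homeo_facts[OF hS] unfolding x'_def by auto
  qed
  then show ?thesis unfolding int_iter_def using False
    apply simp
    by (intro fib_iter) (use homeo_facts[OF hT] homeo_facts[OF hS] f y in \<open>auto simp: factor_map_def\<close>)
qed

lemma topspace_hyper: "topspace (hyper_topology X) = hyperspace X"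
proof -
  have "topspace (hyper_topology X) = \<Union>{U. hyper_open X U}"
    unfolding hyper_topology_def topspace_def using istopology_hyper_open[of X] by (simp add: topology_inverse')
  also have "\<dots> = hyperspace X"
  proof
    show "\<Union>{U. hyper_open X U} \<subseteq> hyperspace X" unfolding hyper_open_def by blast
    have "hyper_open X (hyperspace X)" unfolding hyper_open_def by (auto intro: exI[of _ 1])
    then show "hyperspace X \<subseteq> \<Union>{U. hyper_open X U}" by blast
  qed
  finally show ?thesis .
qed

lemma infdist_less_ex:
  assumes "A \<noteq> {}" "infdist x A < e" shows "\<exists>a\<in>A. dist x a < e"
  using assms unfolding infdist_def by (simp add: cINF_less_iff)

lemma infdist_le_hd2:
  assumes "bounded X" "A \<subseteq> X" "B \<subseteq> X" "A \<noteq> {}" "x \<in> B"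
  shows "infdist x A \<le> hausdorff_dist A B"
proof -
  obtain a where a: "a \<in> A" using assms by blast
  have "bdd_above ((\<lambda>b. infdist b A) ` B)"
  proof (rule bdd_aboveI2)
    fix b assume "b \<in> B"
    then show "infdist b A \<le> diameter X"
      using infdist_le[OF a, of b] diameter_bounded_bound[OF assms(1), of b a] a assms \<open>b \<in> B\<close> by force
  qed
  then have "infdist x A \<le> (SUP b\<in>B. infdist b A)" using assms(5) by (rule cSUP_upper2) simp
  then show ?thesis unfolding hausdorff_dist_def by linarith
qed

lemma fib_hyper:
  fixes \<pi> :: "'a::metric_space \<Rightarrow> 'b::metric_space"
  assumes "compact X" "continuous_on X \<pi>" "y \<in> \<pi> ` X"
  shows "fib X \<pi> y \<in> hyperspace X"
proof -
  have "fib X \<pi> y = {x \<in> X. \<pi> x = y}" by (auto simp: fib_def)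
  moreover have "closed {x \<in> X. \<pi> x = y}"
    using continuous_closed_preimage_constant[OF assms(2) compact_imp_closed[OF assms(1)]] by blast
  ultimately show ?thesis using assms(3) unfolding hyperspace_def by (auto simp: fib_def)
qed

lemma sep_from_close:
  assumes "\<forall>i<m. p i \<in> P" "\<forall>i<m. \<forall>j<m. i \<noteq> j \<longrightarrow> c \<le> dist (p i) (p j)" "c > 0"
    and "\<forall>x\<in>P. \<exists>b\<in>B. dist x b < c/4" "finite B"
  shows "m \<le> card B"
proof -
  have "\<forall>i. \<exists>b. i < m \<longrightarrow> b \<in> B \<and> dist (p i) b < c/4"
    using assms(1,4) by metis
  then obtain q where q: "\<And>i. i < m \<Longrightarrow> q i \<in> B \<and> dist (p i) (q i) < c/4"
    by metis
  have "inj_on q {..<m}"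
  proof (rule inj_onI, rule ccontr)
    fix i j assume ij: "i \<in> {..<m}" "j \<in> {..<m}" "q i = q j" "i \<noteq> j"
    have "dist (p i) (p j) \<le> dist (p i) (q i) + dist (p j) (q j)"
      using ij(3) dist_triangle3[of "p i" "p j" "q i"] by (simp add: dist_commute)
    moreover have "c \<le> dist (p i) (p j)" using assms(2) ij by auto
    ultimately show False using q[of i] q[of j] ij assms(3) by auto
  qed
  moreover have "q ` {..<m} \<subseteq> B" using q by auto
  ultimately show ?thesis using card_inj_on_le[of q "{..<m}" B] assms(5) by simp
qed

lemma ellis_bound:
  assumes cX: "compact X" and hT: "homeomorphism X X T (inv_into X T)"
    and hS: "homeomorphism Y Y S (inv_into Y S)" and f: "factor_map X T Y S \<pi>"
    and sep: "\<forall>y\<in>Y. sepin (fib X \<pi> y) m c" and c: "c > 0" and y0: "y0 \<in> Y"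
    and u: "u \<in> hyper_ellis T X" and fin: "finite (u (fib X \<pi> y0))"
  shows "m \<le> card (u (fib X \<pi> y0))"
proof -
  define A0 where "A0 = fib X \<pi> y0"
  define P where "P = product_topology (\<lambda>_. hyper_topology X) (hyperspace X)"
  define S0 where "S0 = {restrict (\<lambda>A. int_iter T X n ` A) (hyperspace X) | n. True}"
  have A0: "A0 \<in> hyperspace X" unfolding A0_def using f y0 cX
    by (intro fib_hyper) (auto simp: factor_map_def)
  have uc: "u \<in> P closure_of S0" using u unfolding hyper_ellis_def P_def S0_def .
  then have uP: "u \<in> topspace P" by (simp add: in_closure_of)
  define B0 where "B0 = u A0"
  have B0: "B0 \<in> hyperspace X" using uP A0 unfolding P_def B0_def by (auto simp: topspace_hyper)
  then have B0X: "B0 \<subseteq> X" "B0 \<noteq> {}" unfolding hyperspace_def by auto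
  have bX: "bounded X" using cX by (rule compact_imp_bounded)
  define Ob where "Ob = {B \<in> hyperspace X. \<exists>r<c/4. \<forall>x\<in>B. infdist x B0 \<le> r}"
  have "hyper_open X Ob" unfolding hyper_open_def
  proof (intro conjI ballI)
    show "Ob \<subseteq> hyperspace X" unfolding Ob_def by auto
  next
    fix B assume "B \<in> Ob"
    then obtain r where B: "B \<in> hyperspace X" "r < c/4" "\<forall>x\<in>B. infdist x B0 \<le> r"
      unfolding Ob_def by auto
    show "\<exists>e>0. \<forall>B'\<in>hyperspace X. hausdorff_dist B B' < e \<longrightarrow> B' \<in> Ob"
    proof (intro exI[of _ "c/4 - r"] conjI ballI impI)
      fix B' assume B': "B' \<in> hyperspace X" "hausdorff_dist B B' < c/4 - r"
      have "\<forall>x'\<in>B'. infdist x' B0 \<le> r + hausdorff_dist B B'"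
      proof
        fix x' assume x': "x' \<in> B'"
        have "infdist x' B \<le> hausdorff_dist B B'"
          using B B' x' bX by (intro infdist_le_hd2[of X]) (auto simp: hyperspace_def)
        have "infdist x' B0 \<le> r + hausdorff_dist B B' + e" if e: "e > 0" for e
        proof -
          have "infdist x' B < hausdorff_dist B B' + e"
            using \<open>infdist x' B \<le> hausdorff_dist B B'\<close> e by simp
          then obtain x where x: "x \<in> B" "dist x' x < hausdorff_dist B B' + e"
            using infdist_less_ex[of B x'] B(1) unfolding hyperspace_def by auto
          have "infdist x' B0 \<le> infdist x B0 + dist x' x" by (rule infdist_triangle)
          then show ?thesis using x B(3) by fastforce
        qed
        then show "infdist x' B0 \<le> r + hausdorff_dist B B'"
          by (meson field_le_epsilon)
      qed
      then show "B' \<in> Ob" unfolding Ob_def using B' by (intro CollectI conjI exI[of _ "r + hausdorff_dist B B'"]) auto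
    qed (use B in auto)
  qed
  then have Oo: "openin (hyper_topology X) Ob"
    unfolding hyper_topology_def using istopology_hyper_open[of X] by (simp add: topology_inverse')
  define W where "W = {g \<in> topspace P. g A0 \<in> Ob}"
  have "openin P W" unfolding W_def P_def
    by (rule openin_continuous_map_preimage[OF continuous_map_product_projection[OF A0]]) (rule Oo)
  moreover have "u \<in> W" unfolding W_def Ob_def using uP B0
    by (auto simp: B0_def[symmetric] infdist_zero c intro!: exI[of _ 0])
  ultimately obtain g where g: "g \<in> S0" "g \<in> W" using uc by (auto simp: in_closure_of)
  then obtain n where gn: "g = restrict (\<lambda>A. int_iter T X n ` A) (hyperspace X)" unfolding S0_def by auto
  have gA: "g A0 = fib X \<pi> (int_iter S Y n y0)" "int_iter S Y n y0 \<in> Y"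
    using fib_int_iter[OF hT hS f y0, of n] A0 gn unfolding A0_def by auto
  obtain p where p: "\<forall>i<m. p i \<in> g A0" "\<forall>i<m. \<forall>j<m. i \<noteq> j \<longrightarrow> c \<le> dist (p i) (p j)"
    using sep gA unfolding sepin_def by metis
  obtain r where r: "r < c/4" "\<forall>x\<in>g A0. infdist x B0 \<le> r" using g(2) unfolding W_def Ob_def by auto
  have "\<forall>x\<in>g A0. \<exists>b\<in>B0. dist x b < c/4"
  proof
    fix x assume "x \<in> g A0"
    then have "infdist x B0 < c/4" using r by force
    then show "\<exists>b\<in>B0. dist x b < c/4" using infdist_less_ex B0X by blast
  qed
  then show ?thesis using sep_from_close[OF p c] fin unfolding B0_def A0_def by blast
qed

lemma funpow_cont:
  assumes "continuous_on Y S" "S ` Y \<subseteq> Y"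
  shows "continuous_on Y (S^^n) \<and> (S^^n) ` Y \<subseteq> Y"
proof (induction n)
  case 0 then show ?case by (simp add: continuous_on_id)
next
  case (Suc n)
  have "continuous_on Y (S \<circ> (S^^n))"
    using Suc assms by (intro continuous_on_compose) (auto intro: continuous_on_subset)
  then show ?case using Suc assms by (auto simp: image_subset_iff)
qed

lemma usc:
  fixes \<pi> :: "'a::metric_space \<Rightarrow> 'b::metric_space"
  assumes cX: "compact X" and cont: "continuous_on X \<pi>" and y: "y \<in> \<pi> ` X" and e: "\<epsilon> > 0"
  shows "\<exists>\<eta>>0. \<forall>x\<in>X. dist (\<pi> x) y < \<eta> \<longrightarrow> (\<exists>z\<in>fib X \<pi> y. dist x z < \<epsilon>)"
proof -
  define F where "F = fib X \<pi> y"
  have Fne: "F \<noteq> {}" using y unfolding F_def fib_def by auto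
  define K where "K = X \<inter> {x. \<epsilon> \<le> infdist x F}"
  have "closed {x. \<epsilon> \<le> infdist x F}"
    by (intro closed_Collect_le continuous_on_const continuous_on_infdist continuous_on_id)
  then have cK: "compact K" unfolding K_def using cX by (intro compact_Int_closed)
  have cPK: "compact (\<pi> ` K)"
    using cK cont unfolding K_def by (intro compact_continuous_image) (auto intro: continuous_on_subset)
  have good: "\<exists>z\<in>F. dist x z < \<epsilon>" if "x \<in> X" "x \<notin> K" for x
    using that infdist_less_ex[OF Fne] unfolding K_def by force
  show ?thesis
  proof (cases "\<pi> ` K = {}")
    case True
    then show ?thesis using good unfolding F_def by (intro exI[of _ 1]) auto
  next
    case False
    have "y \<notin> \<pi> ` K"
    proof
      assume "y \<in> \<pi> ` K"
      then obtain x where "x \<in> K" "\<pi> x = y" by auto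
      then have "x \<in> F" "\<epsilon> \<le> infdist x F" unfolding K_def F_def fib_def by auto
      then show False using e by (simp add: infdist_zero)
    qed
    then have pos: "infdist y (\<pi> ` K) > 0"
      using False cPK by (intro infdist_pos_not_in_closed compact_imp_closed)
    show ?thesis
    proof (intro exI[of _ "infdist y (\<pi> ` K)"] conjI ballI impI pos)
      fix x assume x: "x \<in> X" "dist (\<pi> x) y < infdist y (\<pi> ` K)"
      have "x \<notin> K"
      proof
        assume "x \<in> K"
        then have "infdist y (\<pi> ` K) \<le> dist y (\<pi> x)" by (intro infdist_le) auto
        then show False using x by (simp add: dist_commute)
      qed
      then show "\<exists>z\<in>fib X \<pi> y. dist x z < \<epsilon>" using good x unfolding F_def by auto
    qed
  qed
qed

lemma closure_sep:
  fixes \<pi> :: "'a::metric_space \<Rightarrow> 'b::metric_space"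
  assumes cX: "compact X" and cont: "continuous_on X \<pi>" and y: "y \<in> \<pi> ` X" and c: "c > 0"
    and cl: "y \<in> closure {y. sepin (fib X \<pi> y) m c}"
  shows "sepin (fib X \<pi> y) m (c/2)"
proof -
  obtain \<eta> where eta: "\<eta> > 0" "\<forall>x\<in>X. dist (\<pi> x) y < \<eta> \<longrightarrow> (\<exists>z\<in>fib X \<pi> y. dist x z < c/4)"
    using usc[OF cX cont y, of "c/4"] c by auto
  obtain y' where y': "sepin (fib X \<pi> y') m c" "dist y' y < \<eta>"
    using cl eta(1) unfolding closure_approachable by auto
  obtain p where p: "\<forall>i<m. p i \<in> fib X \<pi> y'" "\<forall>i<m. \<forall>j<m. i \<noteq> j \<longrightarrow> c \<le> dist (p i) (p j)"
    using y'(1) unfolding sepin_def by blast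
  have "\<forall>i. \<exists>z. i < m \<longrightarrow> z \<in> fib X \<pi> y \<and> dist (p i) z < c/4"
    using p(1) eta(2) y'(2) unfolding fib_def by auto
  then obtain q where q: "\<And>i. i < m \<Longrightarrow> q i \<in> fib X \<pi> y \<and> dist (p i) (q i) < c/4" by metis
  show ?thesis unfolding sepin_def
  proof (intro exI[of _ q] conjI allI impI)
    fix i j assume ij: "i < m" "j < m" "i \<noteq> j"
    have "dist (p i) (p j) \<le> dist (p i) (q i) + dist (q i) (q j) + dist (q j) (p j)"
      using dist_triangle[of "p i" "p j" "q i"] dist_triangle[of "q i" "p j" "q j"] by linarith
    moreover have "c \<le> dist (p i) (p j)" using p(2) ij by auto
    ultimately show "c/2 \<le> dist (q i) (q j)" using q[OF ij(1)] q[OF ij(2)] by (simp add: dist_commute)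
  qed (use q in auto)
qed

lemma spread:
  fixes \<pi> :: "'a::metric_space \<Rightarrow> 'b::metric_space"
  assumes cX: "compact X" and cY: "compact Y" and hT: "homeomorphism X X T (inv_into X T)"
    and hS: "homeomorphism Y Y S (inv_into Y S)" and f: "factor_map X T Y S \<pi>"
    and mini: "minimal_system Y S"
    and V: "openin (top_of_set Y) V" "V \<noteq> {}" "\<forall>v\<in>V. sepin (fib X \<pi> v) m c" and c: "c > 0"
  shows "\<exists>c'>0. \<forall>y\<in>Y. sepin (fib X \<pi> y) m c'"
proof -
  have VY: "V \<subseteq> Y" using openin_subset[OF V(1)] by simp
  have Scont: "continuous_on Y S" "S ` Y \<subseteq> Y" using hS unfolding homeomorphism_def by auto
  have Tcont: "continuous_on X T" "T ` X \<subseteq> X" using hT unfolding homeomorphism_def by auto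
  note SS = funpow_cont[OF Scont] and TT = funpow_cont[OF Tcont]
  obtain O0 where O0: "open O0" "V = Y \<inter> O0" using V(1) by (auto simp: openin_open)
  define Z where "Z = {y\<in>Y. \<forall>n. (S^^n) y \<notin> V}"
  have "Z = (\<Inter>n. Y \<inter> (S^^n) -` (- O0))"
  proof (intro equalityI subsetI)
    fix y assume y: "y \<in> Z"
    show "y \<in> (\<Inter>n. Y \<inter> (S^^n) -` (- O0))"
    proof (rule InterI, clarify)
      fix n
      have "(S^^n) y \<in> Y" "(S^^n) y \<notin> V" using y SS[of n] unfolding Z_def by blast+
      then show "y \<in> Y \<inter> (S^^n) -` (- O0)" using y unfolding O0(2) Z_def by blast
    qed
  next
    fix y assume y: "y \<in> (\<Inter>n. Y \<inter> (S^^n) -` (- O0))"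
    then have "y \<in> Y" "\<And>n. (S^^n) y \<notin> O0" by blast+
    then show "y \<in> Z" unfolding Z_def O0(2) by blast
  qed

  moreover have "closed (Y \<inter> (S^^n) -` (- O0))" for n
    using SS[of n] O0(1) compact_imp_closed[OF cY] by (intro continuous_closed_preimage) auto
  then have "closed (\<Inter>n. Y \<inter> (S^^n) -` (- O0))" by (intro closed_INT) auto
  ultimately have "closed Z" by (simp only:)
  moreover have "S ` Z \<subseteq> Z"
  proof
    fix z assume "z \<in> S ` Z"
    then obtain y where "y \<in> Z" "z = S y" by auto
    have "\<forall>n. (S^^n) (S y) \<notin> V"
    proof
      fix n
      have "(S^^n) (S y) = (S^^(Suc n)) y" by (simp only: funpow_Suc_right o_apply)
      moreover have "(S^^(Suc n)) y \<notin> V" using \<open>y \<in> Z\<close> unfolding Z_def by blast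
      ultimately show "(S^^n) (S y) \<notin> V" by simp
    qed
    then show "z \<in> Z" using Scont \<open>y \<in> Z\<close> \<open>z = S y\<close> unfolding Z_def by auto
  qed
  moreover have "Z \<noteq> Y"
  proof
    assume "Z = Y"
    obtain v where "v \<in> V" using V(2) by auto
    have "(S^^0) v \<in> V" using \<open>v \<in> V\<close> by simp
    then have "v \<notin> Z" unfolding Z_def by blast
    then show False using VY \<open>Z = Y\<close> \<open>v \<in> V\<close> by blast
  qed
  moreover have "Z \<subseteq> Y" unfolding Z_def by blast
  ultimately have "Z = {}" using mini unfolding minimal_system_def by (meson order_refl)
  then have hit: "\<forall>y\<in>Y. \<exists>n. (S^^n) y \<in> V" unfolding Z_def by auto
  define U where "U = (\<lambda>n. Y \<inter> (S^^n) -` V) ` UNIV"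
  have "compactin (top_of_set Y) Y" using cY by (simp add: compactin_subtopology)
  moreover have "openin (top_of_set Y) (Y \<inter> (S^^n) -` V)" for n
    using SS[of n] V(1) by (intro continuous_openin_preimage[of Y "S^^n" Y V]) (auto simp: image_subset_iff_funcset)
  then have "\<forall>W\<in>U. openin (top_of_set Y) W" unfolding U_def by blast
  moreover have "Y \<subseteq> \<Union>U" using hit unfolding U_def by auto
  ultimately obtain F where F: "finite F" "F \<subseteq> U" "Y \<subseteq> \<Union>F" unfolding compactin_def by metis
  obtain N0 where N0: "finite N0" "F = (\<lambda>n. Y \<inter> (S^^n) -` V) ` N0"
    using finite_subset_image[OF F(1) F(2)[unfolded U_def]] by blast
  have hit2: "\<forall>y\<in>Y. \<exists>n\<in>N0. (S^^n) y \<in> V" using F(3) N0(2) by auto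
  have "\<forall>n. \<exists>d>0. \<forall>x\<in>X. \<forall>x'\<in>X. dist x' x < d \<longrightarrow> dist ((T^^n) x') ((T^^n) x) < c"
  proof
    fix n
    have "uniformly_continuous_on X (T^^n)" using TT cX by (intro compact_uniformly_continuous) auto
    then show "\<exists>d>0. \<forall>x\<in>X. \<forall>x'\<in>X. dist x' x < d \<longrightarrow> dist ((T^^n) x') ((T^^n) x) < c"
      unfolding uniformly_continuous_on_def using c by blast
  qed
  from choice[OF this] obtain d where d0: "\<forall>n. d n > 0 \<and> (\<forall>x\<in>X. \<forall>x'\<in>X. dist x' x < d n \<longrightarrow> dist ((T^^n) x') ((T^^n) x) < c)"
    by blast
  then have d: "\<And>n. d n > 0" "\<And>n x x'. x \<in> X \<Longrightarrow> x' \<in> X \<Longrightarrow> dist x' x < d n \<Longrightarrow> dist ((T^^n) x') ((T^^n) x) < c"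
    by blast+
  define c' where "c' = Min (insert 1 (d ` N0))"
  have c'pos: "c' > 0" unfolding c'_def using N0(1) d(1) by (subst Min_gr_iff) auto
  have c'le: "c' \<le> d n" if "n \<in> N0" for n unfolding c'_def using N0(1) that by (intro Min_le) auto
  have "\<forall>y\<in>Y. sepin (fib X \<pi> y) m c'"
  proof
    fix y assume y: "y \<in> Y"
    then obtain n where n: "n \<in> N0" "(S^^n) y \<in> V" using hit2 by blast
    obtain p where p: "\<forall>i<m. p i \<in> fib X \<pi> ((S^^n) y)" "\<forall>i<m. \<forall>j<m. i \<noteq> j \<longrightarrow> c \<le> dist (p i) (p j)"
      using V(3) n(2) unfolding sepin_def by blast
    have im: "(T^^n) ` fib X \<pi> y = fib X \<pi> ((S^^n) y)"
      using fib_iter[of T X S Y \<pi> y n] homeo_facts[OF hT] homeo_facts[OF hS] f y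
      unfolding factor_map_def by auto
    have "\<forall>i. \<exists>z. i < m \<longrightarrow> z \<in> fib X \<pi> y \<and> p i = (T^^n) z"
      using p(1) im by (metis imageE)
    from choice[OF this] obtain q where "\<forall>i. i < m \<longrightarrow> q i \<in> fib X \<pi> y \<and> p i = (T^^n) (q i)" by blast
    then have q: "\<And>i. i < m \<Longrightarrow> q i \<in> fib X \<pi> y \<and> p i = (T^^n) (q i)" by blast
    show "sepin (fib X \<pi> y) m c'" unfolding sepin_def
    proof (intro exI[of _ q] conjI allI impI)
      fix i j assume ij: "i < m" "j < m" "i \<noteq> j"
      show "c' \<le> dist (q i) (q j)"
      proof (rule ccontr)
        assume "\<not> c' \<le> dist (q i) (q j)"
        then have "dist (q i) (q j) < d n" using c'le[OF n(1)] by simp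
        then have "dist (p i) (p j) < c" using d(2)[of "q j" "q i" n] q[OF ij(1)] q[OF ij(2)]
          unfolding fib_def by auto
        then show False using p(2) ij by force
      qed
    qed (use q in auto)
  qed
  then show ?thesis using c'pos by blast
qed

lemma finite_sep:
  fixes D :: "'a::metric_space set"
  assumes "finite D" "card D = n"
  shows "\<exists>c>0. sepin D n c"
proof -
  define E where "E = (\<lambda>(a,b). dist a b) ` {(a,b). a \<in> D \<and> b \<in> D \<and> a \<noteq> b}"
  have "{(a,b). a \<in> D \<and> b \<in> D \<and> a \<noteq> b} \<subseteq> D \<times> D" by blast
  then have "finite {(a,b). a \<in> D \<and> b \<in> D \<and> a \<noteq> b}" using assms(1) finite_subset by blast
  then have fE: "finite E" unfolding E_def by (rule finite_imageI)
  define c where "c = Min (insert 1 E)"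
  have "\<forall>x\<in>E. 0 < x" unfolding E_def by auto
  then have cpos: "c > 0" unfolding c_def using fE by (subst Min_gr_iff) auto
  have cle: "c \<le> dist a b" if "a \<in> D" "b \<in> D" "a \<noteq> b" for a b
  proof -
    have "dist a b \<in> E" unfolding E_def using that by force
    then show ?thesis unfolding c_def using fE by (intro Min_le) auto
  qed
  obtain g where g: "bij_betw g {0..<card D} D" using ex_bij_betw_nat_finite[OF assms(1)] by blast
  then have gi: "inj_on g {0..<n}" "g ` {0..<n} = D" using assms(2) unfolding bij_betw_def by auto
  have "sepin D n c" unfolding sepin_def
  proof (intro exI[of _ g] conjI allI impI)
    fix i assume "i < n" then show "g i \<in> D" using gi(2) by auto
  next
    fix i j assume ij: "i < n" "j < n" "i \<noteq> j"
    then have "g i \<noteq> g j" using gi(1) by (meson atLeastLessThan_iff inj_onD zero_le)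
    moreover have "g i \<in> D" "g j \<in> D" using ij gi(2) by auto
    ultimately show "c \<le> dist (g i) (g j)" using cle by blast
  qed
  then show ?thesis using cpos by blast
qed

theorem lemma5p2:
  fixes X :: "'a::metric_space set" and T :: "'a \<Rightarrow> 'a"
    and Y :: "'b::metric_space set" and S :: "'b \<Rightarrow> 'b"
    and \<pi> :: "'a \<Rightarrow> 'b" and K :: nat
  assumes "compact X" and "homeomorphism X X T (inv_into X T)"
    and "compact Y" and "homeomorphism Y Y S (inv_into Y S)"
    and "factor_map X T Y S \<pi>"
    and "minimal_system Y S"
    and "K \<ge> 1"
    and "\<forall>y\<in>Y. \<exists>u\<in>hyper_ellis T X.
           finite (u (X \<inter> \<pi> -` {y})) \<and> card (u (X \<inter> \<pi> -` {y})) \<le> K"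
  shows "\<exists>k\<le>K. almost_k_to_1 X Y \<pi> k"
proof -
  note cX = assms(1) and hT = assms(2) and cY = assms(3) and hS = assms(4) and f = assms(5)
    and mini = assms(6) and hyp = assms(8)
  have piX: "\<pi> ` X = Y" and cont: "continuous_on X \<pi>" using f unfolding factor_map_def by auto
  obtain y0 where y0: "y0 \<in> Y" using mini unfolding minimal_system_def by auto
  define Pset where "Pset = {m. \<exists>c>0. \<forall>y\<in>Y. sepin (fib X \<pi> y) m c}"
  have Pbound: "m \<le> K" if mP: "m \<in> Pset" for m
  proof -
    obtain c where c: "c > 0" "\<forall>y\<in>Y. sepin (fib X \<pi> y) m c" using mP unfolding Pset_def by auto
    obtain u where u: "u \<in> hyper_ellis T X" "finite (u (fib X \<pi> y0))" "card (u (fib X \<pi> y0)) \<le> K"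
      using hyp y0 unfolding fib_def by blast
    have "m \<le> card (u (fib X \<pi> y0))" using ellis_bound[OF cX hT hS f c(2) c(1) y0 u(1,2)] .
    then show ?thesis using u(3) by simp
  qed
  have "1 \<in> Pset" unfolding Pset_def
  proof (intro CollectI exI[of _ 1] conjI ballI)
    fix y assume "y \<in> Y"
    then obtain x where "x \<in> fib X \<pi> y" using piX unfolding fib_def by auto
    then show "sepin (fib X \<pi> y) 1 1" unfolding sepin_def by (intro exI[of _ "\<lambda>_. x"]) auto
  qed simp
  have "Pset \<subseteq> {..K}" using Pbound by auto
  then have fP: "finite Pset" using finite_subset by blast
  define k where "k = Max Pset"
  have kP: "k \<in> Pset" unfolding k_def using fP \<open>1 \<in> Pset\<close> by (intro Max_in) auto
  have k1: "1 \<le> k" unfolding k_def using fP \<open>1 \<in> Pset\<close> by (intro Max_ge) auto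
  have kK: "k \<le> K" using Pbound kP by blast
  have notP: "k + 1 \<notin> Pset"
  proof
    assume "k + 1 \<in> Pset"
    then have "k + 1 \<le> k" unfolding k_def using fP by (intro Max_ge) auto
    then show False by simp
  qed
  obtain ck where ck: "ck > 0" "\<forall>y\<in>Y. sepin (fib X \<pi> y) k ck" using kP unfolding Pset_def by auto
  define Fn where "Fn = (\<lambda>n::nat. {y. sepin (fib X \<pi> y) (k+1) (inverse (real (Suc n)))})"
  define U where "U = (\<lambda>n. Y \<inter> - closure (Fn n))"
  have Uopen: "openin (top_of_set Y) (U n)" for n unfolding U_def by (intro openin_open_Int) auto
  have Udense: "Y \<subseteq> closure (U n)" for n
  proof
    fix y assume y: "y \<in> Y"
    show "y \<in> closure (U n)"
    proof (rule ccontr)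
      assume "y \<notin> closure (U n)"
      then obtain e where e: "e > 0" "\<forall>z\<in>U n. \<not> dist z y < e" unfolding closure_approachable by auto
      define V where "V = Y \<inter> ball y e"
      have Vo: "openin (top_of_set Y) V" unfolding V_def by (intro openin_open_Int) auto
      have Vne: "V \<noteq> {}" using y e unfolding V_def by auto
      have "\<forall>v\<in>V. sepin (fib X \<pi> v) (k+1) (inverse (real (Suc n)) / 2)"
      proof
        fix v assume v: "v \<in> V"
        then have "v \<notin> U n" using e unfolding V_def by (auto simp: dist_commute)
        then have "v \<in> closure (Fn n)" using v unfolding U_def V_def by auto
        then show "sepin (fib X \<pi> v) (k+1) (inverse (real (Suc n)) / 2)"
          using closure_sep[OF cX cont, of v "inverse (real (Suc n))" "k+1"] v piX
          unfolding Fn_def V_def by auto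
      qed
      from spread[OF cX cY hT hS f mini Vo Vne this] have "k + 1 \<in> Pset"
        unfolding Pset_def by auto
      then show False using notP by simp
    qed
  qed
  define R where "R = {y\<in>Y. finite (fib X \<pi> y) \<and> card (fib X \<pi> y) = k}"
  have noD: "False" if y: "y \<in> Y" "\<forall>n. y \<notin> Fn n" and D: "D \<subseteq> fib X \<pi> y" "finite D" "card D = k+1" for y D
  proof -
    obtain c where c: "c > 0" "sepin D (k+1) c" using finite_sep[OF D(2,3)] by blast
    obtain n where n: "inverse (real (Suc n)) < c" using reals_Archimedean[OF c(1)] by blast
    obtain q where q: "\<forall>i<k+1. q i \<in> D" "\<forall>i<k+1. \<forall>j<k+1. i \<noteq> j \<longrightarrow> c \<le> dist (q i) (q j)"
      using c(2) unfolding sepin_def by blast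
    have "sepin (fib X \<pi> y) (k+1) (inverse (real (Suc n)))" unfolding sepin_def
    proof (intro exI[of _ q] conjI allI impI)
      fix i j assume "i < k+1" "j < k+1" "i \<noteq> j"
      then have "c \<le> dist (q i) (q j)" using q(2) by blast
      then show "inverse (real (Suc n)) \<le> dist (q i) (q j)" using n by linarith
    qed (use q(1) D(1) in blast)
    then show False using y(2) unfolding Fn_def by auto
  qed
  have inR: "y \<in> R" if y: "y \<in> Y" "\<forall>n. y \<in> U n" for y
  proof -
    have yF: "\<forall>n. y \<notin> Fn n" using y(2) closure_subset unfolding U_def by blast
    have fin: "finite (fib X \<pi> y)"
    proof (rule ccontr)
      assume "infinite (fib X \<pi> y)"
      then obtain D where "finite D" "card D = k+1" "D \<subseteq> fib X \<pi> y"
        using infinite_arbitrarily_large by blast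
      then show False using noD[OF y(1) yF] by blast
    qed
    have le: "card (fib X \<pi> y) \<le> k"
    proof (rule ccontr)
      assume "\<not> card (fib X \<pi> y) \<le> k"
      then have "k + 1 \<le> card (fib X \<pi> y)" by simp
      then obtain D where "D \<subseteq> fib X \<pi> y" "card D = k+1" "finite D" by (rule obtain_subset_with_card_n)
      then show False using noD[OF y(1) yF] by blast
    qed
    obtain p where p: "\<forall>i<k. p i \<in> fib X \<pi> y" "\<forall>i<k. \<forall>j<k. i \<noteq> j \<longrightarrow> ck \<le> dist (p i) (p j)"
      using ck(2) y(1) unfolding sepin_def by blast
    have "inj_on p {..<k}"
    proof (rule inj_onI, rule ccontr)
      fix i j assume "i \<in> {..<k}" "j \<in> {..<k}" "p i = p j" "i \<noteq> j"
      then show False using p(2) ck(1) by fastforce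
    qed
    then have "k \<le> card (fib X \<pi> y)" using card_inj_on_le[of p "{..<k}" "fib X \<pi> y"] p(1) fin by auto
    then show ?thesis unfolding R_def using y(1) fin le by auto
  qed
  have "residual_in Y R" unfolding residual_in_def
  proof (intro conjI exI[of _ U] allI)
    show "R \<subseteq> Y" unfolding R_def by auto
    show "(\<Inter>n. U n) \<inter> Y \<subseteq> R" using inR by blast
  qed (use Uopen Udense in auto)
  moreover have "\<forall>y\<in>R. finite (X \<inter> \<pi> -` {y}) \<and> card (X \<inter> \<pi> -` {y}) = k"
    unfolding R_def fib_def by blast
  ultimately have "almost_k_to_1 X Y \<pi> k" unfolding almost_k_to_1_def by blast
  then show ?thesis using kK by blast
qed

end
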